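(* Let $(J,S)$ be a homogeneous $d$-dimensional multi-time Markov renewal chain with semi-Markov kernel $q$, $u=\sum_{n\ge0}q^{(n)}$, and Markov renewal function $U$. Then $U$ satisfies the multi-time Markov renewal equation $U=\mathrm{dg}(\mathbbm{1}_s)+q*U$, and consequently $U=\mathrm{dg}(\mathbbm{1}_s)*u$, i.e. $U(k_{1:d})=\sum_{l\le k_{1:d}}u(l)$.
   Context: $E=\{1,\dots,s\}$; $\mathcal{M}_s(\mathbb{N}^d)$ is the set of functions $\mathbb{N}^d\to\mathbb{R}^{s\times s}$ with convolution $[A*B](k)=\sum_{l+l'=k}A(l)B(l')$, powers $A^{(0)}=\mathbbm{I}_s$ ($I_s$ at $0_d$, zero elsewhere), $A^{(n)}=A*A^{(n-1)}$. $\mathbbm{1}$ is the real sequence identically $1$ on $\mathbb{N}^d$, and $\mathrm{dg}(\mathbbm{1}_s)$ is the matrix sequence equal to $I_s$ at every $k\in\mathbb{N}^d$ (so $[\mathrm{dg}(\mathbbm{1}_s)*A](k)=\sum_{l\le k}A(l)$). $\mathbb{N}^d$ carries the componentwise partial order $\le$, with $k<l$ meaning $k\le l$, $k\ne l$. A homogeneous $d$-dimensional multi-time Markov renewal chain is a process $(J_n,S_n)_{n\in\mathbb{N}}$, $J_n\in E$, $S_n\in\mathbb{N}^d$, $S_0=0_d$, $S_n<S_{n+1}$, with a.s. $\mathbb{P}(J_{n+1}=j,S_{n+1}-S_n=k\mid J_{0:n},S_{0:n})=q_{J_nj}(k)$, $q_{ij}(k)=\mathbb{P}(J_{n+1}=j,S_{n+1}-S_n=k\mid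 J_n=i)$ independent of $n$. $N(k)=\sup\{n:S_n\le k\}$; $\widetilde{N}_j(k)=\sum_{n=0}^{N(k)}\mathbf{1}\{J_n=j\}$; the Markov renewal function is $U_{ij}(k)=\mathbb{E}_i[\widetilde{N}_j(k)]$, where $\mathbb{E}_i$ is expectation given $J_0=i$. *)

theory Defs
  imports "HOL-Probability.Probability"
begin

text \<open>Matrix sequences on the multi-time index set: the index set \<open>\<nat>^d\<close> is
  \<open>nat ^ 'd\<close> (componentwise order, componentwise addition); an s x s real matrix is
  a function \<open>nat \<Rightarrow> nat \<Rightarrow> real\<close> whose relevant entries are those with indices in
  \<open>{1..s}\<close>. A matrix sequence \<open>A\<close> is written \<open>A k i j\<close> for the (i,j) entry of A(k).\<close>

type_synonym 'd mseq = "nat ^ 'd \<Rightarrow> nat \<Rightarrow> nat \<Rightarrow> real"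

definition mconv :: "nat \<Rightarrow> 'd::finite mseq \<Rightarrow> 'd mseq \<Rightarrow> 'd mseq" where
  "mconv s A B = (\<lambda>k i j. \<Sum>(l, l') \<in> {(l, l'). l + l' = k}. \<Sum>m\<in>{1..s}. A l i m * B l' m j)"

definition munit :: "'d::finite mseq" where
  "munit = (\<lambda>k i j. if k = 0 \<and> i = j then 1 else 0)"

primrec mpow :: "nat \<Rightarrow> 'd::finite mseq \<Rightarrow> nat \<Rightarrow> 'd mseq" where
  "mpow s A 0 = munit"
| "mpow s A (Suc n) = mconv s A (mpow s A n)"

definition dg1 :: "'d::finite mseq" where
  "dg1 = (\<lambda>k i j. if i = j then 1 else 0)"

definition useq :: "nat \<Rightarrow> 'd::finite mseq \<Rightarrow> 'd mseq" where
  "useq s q = (\<lambda>k i j. \<Sum>n. mpow s q n k i j)"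

definition Ncount :: "(nat \<Rightarrow> 'w \<Rightarrow> nat ^ 'd::finite) \<Rightarrow> nat ^ 'd \<Rightarrow> 'w \<Rightarrow> nat" where
  "Ncount S k \<omega> = Sup {n. S n \<omega> \<le> k}"

definition Ntilde :: "(nat \<Rightarrow> 'w \<Rightarrow> nat) \<Rightarrow> (nat \<Rightarrow> 'w \<Rightarrow> nat ^ 'd::finite) \<Rightarrow> nat \<Rightarrow> nat ^ 'd \<Rightarrow> 'w \<Rightarrow> real" where
  "Ntilde J S j k \<omega> = (\<Sum>n\<in>{0..Ncount S k \<omega>}. if J n \<omega> = j then 1 else 0)"

text \<open>Markov renewal function \<open>U_ij(k) = E_i[\<tilde>N_j(k)]\<close>, where \<open>M i\<close> is the law of the
  chain started in state i.\<close>
definition MRF :: "(nat \<Rightarrow> 'w measure) \<Rightarrow> (nat \<Rightarrow> 'w \<Rightarrow> nat) \<Rightarrow> (nat \<Rightarrow> 'w \<Rightarrow> nat ^ 'd::finite) \<Rightarrow> 'd mseq" where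
  "MRF M J S = (\<lambda>k i j. integral\<^sup>L (M i) (Ntilde J S j k))"

end

theory Submission
  imports Defs
begin

lemma finite_atMost_vec[simp]: "finite {..(k::nat^'d::finite)}"
proof -
  have "{..k} \<subseteq> vec_lambda ` (PiE UNIV (\<lambda>c. {..k$c}))"
  proof
    fix x assume "x \<in> {..k}"
    then have "vec_nth x \<in> PiE UNIV (\<lambda>c. {..k$c})" by (auto simp: less_eq_vec_def)
    then show "x \<in> vec_lambda ` PiE UNIV (\<lambda>c. {..k$c})" by (metis image_eqI vec_nth_inverse)
  qed
  then show ?thesis by (rule finite_subset) (intro finite_imageI finite_PiE; simp)
qed

lemma sum_pairs: fixes k :: "nat^'d::finite"
  shows "(\<Sum>(l, l') \<in> {(l, l'). l + l' = k}. f l l') = (\<Sum>l\<in>{..k}. f l (k - l))"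
proof -
  have "bij_betw (\<lambda>l. (l, k - l)) {..k} {(l, l'). l + l' = k}"
    by (rule bij_betwI[where g=fst]; auto simp: vec_eq_iff less_eq_vec_def; metis le_add1 add_diff_cancel_left')
  then show ?thesis by (simp add: sum.reindex_bij_betw[symmetric]) 
qed

lemma tri_sum: fixes k :: "nat^'d::finite"
  shows "(\<Sum>x\<in>{..k}. \<Sum>a\<in>{..x}. f a (x - a) (k - x)) = (\<Sum>a\<in>{..k}. \<Sum>b\<in>{..k - a}. f a b (k - a - b))"
proof -
  have "(\<Sum>x\<in>{..k}. \<Sum>a\<in>{..x}. f a (x - a) (k - x)) = (\<Sum>x\<in>{..k}. \<Sum>a\<in>{a\<in>{..k}. a \<le> x}. f a (x - a) (k - x))"
    by (rule sum.cong[OF refl], rule sum.cong) (auto intro: order_trans)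
  also have "\<dots> = (\<Sum>a\<in>{..k}. \<Sum>x\<in>{x\<in>{..k}. a \<le> x}. f a (x - a) (k - x))"
    by (rule sum.swap_restrict) (simp_all add: finite_atMost_vec)
  also have "\<dots> = (\<Sum>a\<in>{..k}. \<Sum>b\<in>{..k - a}. f a b (k - a - b))"
  proof (rule sum.cong[OF refl])
    fix a assume a: "a \<in> {..k}"
    have bij: "bij_betw (\<lambda>b. a + b) {..k - a} {x\<in>{..k}. a \<le> x}"
      using a by (intro bij_betwI[where g="\<lambda>x. x - a"]; auto simp: vec_eq_iff less_eq_vec_def; metis le_diff_conv2 add.commute diff_le_mono le_add_diff_inverse)
    show "(\<Sum>x\<in>{x\<in>{..k}. a \<le> x}. f a (x - a) (k - x)) = (\<Sum>b\<in>{..k - a}. f a b (k - a - b))"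
      using sum.reindex_bij_betw[OF bij, of "\<lambda>x. f a (x - a) (k - x)"] by (simp add: diff_diff_add)
  qed
  finally show ?thesis .
qed

lemma mconv_le: "mconv s A B k i j = (\<Sum>l\<in>{..k}. \<Sum>m\<in>{1..s}. A l i m * B (k - l) m j)"
  unfolding mconv_def by (simp add: sum_pairs)

lemma mconv_assoc: "mconv s (mconv s A B) C k i j = mconv s A (mconv s B C) k i j"
proof -
  have "mconv s (mconv s A B) C k i j =
     (\<Sum>x\<in>{..k}. \<Sum>a\<in>{..x}. \<Sum>m\<in>{1..s}. \<Sum>r\<in>{1..s}. A a i r * B (x - a) r m * C (k - x) m j)"
    unfolding mconv_le
    by (simp add: sum_distrib_right, rule sum.cong[OF refl], rule sum.swap)
  also have "\<dots> = (\<Sum>a\<in>{..k}. \<Sum>b\<in>{..k - a}. \<Sum>m\<in>{1..s}. \<Sum>r\<in>{1..s}. A a i r * B b r m * C (k - a - b) m j)"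
    by (rule tri_sum)
  also have "\<dots> = mconv s A (mconv s B C) k i j"
    unfolding mconv_le
    apply (simp add: sum_distrib_left mult.assoc)
    apply (rule sum.cong[OF refl])
    apply (rule trans[OF _ sum.swap])
    apply (rule sum.cong[OF refl])
    apply (rule sum.swap)
    done
  finally show ?thesis .
qed


lemma if01_mult[simp]: "(if P then 1 else 0) * (x::real) = (if P then x else 0)" by simp

lemma mconv_cong_right:
  "(\<And>l m. m \<in> {1..s} \<Longrightarrow> B l m j = B' l m j) \<Longrightarrow> mconv s A B k i j = mconv s A B' k i j"
  unfolding mconv_le by (intro sum.cong refl) auto

lemma mconv_munit_right: "j \<in> {1..s} \<Longrightarrow> mconv s A munit k i j = A k i j"
proof -
  assume j: "j \<in> {1..s}"
  have "mconv s A munit k i j = (\<Sum>l\<in>{..k}. if l = k then A l i j else 0)"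
    unfolding mconv_le
  proof (intro sum.cong refl)
    fix l assume l: "l \<in> {..k}"
    have e: "(k - l = 0) = (l = k)" using l by (auto simp: vec_eq_iff less_eq_vec_def intro: order.antisym)
    show "(\<Sum>m\<in>{1..s}. A l i m * munit (k - l) m j) = (if l = k then A l i j else 0)"
      using j by (simp add: munit_def e[symmetric] if_distrib cong: if_cong)
  qed
  also have "\<dots> = A k i j" by simp
  finally show ?thesis .
qed

lemma mconv_munit_left: "i \<in> {1..s} \<Longrightarrow> mconv s munit A k i j = A k i j"
proof -
  assume i: "i \<in> {1..s}"
  have "mconv s munit A k i j = (\<Sum>l\<in>{..k}. if l = 0 then A k i j else 0)"
    unfolding mconv_le
    using i by (intro sum.cong refl) (simp add: munit_def sum.delta)
  also have "\<dots> = A k i j" by (subst sum.delta) (simp_all add: less_eq_vec_def)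
  finally show ?thesis .
qed

lemma mpow_Suc': "\<And>k i j. i \<in> {1..s} \<Longrightarrow> j \<in> {1..s} \<Longrightarrow> mpow s q (Suc n) k i j = mconv s (mpow s q n) q k i j"
proof (induction n)
  case 0
  then show ?case by (simp add: mconv_munit_right mconv_munit_left)
next
  case (Suc n)
  have "mpow s q (Suc (Suc n)) k i j = mconv s q (mpow s q (Suc n)) k i j" by simp
  also have "\<dots> = mconv s q (mconv s (mpow s q n) q) k i j"
    by (rule mconv_cong_right) (rule Suc.IH; use Suc.prems in auto)
  also have "\<dots> = mconv s (mpow s q (Suc n)) q k i j"
    by (simp add: mconv_assoc)
  finally show ?case .
qed

definition sz :: "nat^'d::finite \<Rightarrow> nat" where "sz x = (\<Sum>c\<in>UNIV. x$c)"

lemma sz_mono: "x \<le> y \<Longrightarrow> sz x \<le> sz y"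
  unfolding sz_def by (rule sum_mono) (simp add: less_eq_vec_def)

lemma sz_strict: "x < y \<Longrightarrow> sz x < sz y"
  unfolding sz_def
  by (rule sum_strict_mono_ex1) (auto simp: less_vec_def less_eq_vec_def not_le)



lemma vec_add_diff: "a \<le> (l::nat^'d::finite) \<Longrightarrow> a + (l - a) = l"
  by (simp add: vec_eq_iff less_eq_vec_def)

lemma sum_flip: "(\<Sum>l\<in>{..k::nat^'d::finite}. f (k - l)) = (\<Sum>l\<in>{..k}. f l)"
proof -
  have bij: "bij_betw (\<lambda>l. k - l) {..k} {..k}"
    by (intro bij_betwI[where g="\<lambda>l. k - l"]; auto simp: vec_eq_iff less_eq_vec_def)
  show ?thesis using sum.reindex_bij_betw[OF bij, of f] by simp
qed

lemma conv_dg1: "i \<in> {1..s} \<Longrightarrow> mconv s dg1 A k i j = (\<Sum>l\<in>{..k}. A l i j)"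
proof -
  assume i: "i \<in> {1..s}"
  have "mconv s dg1 A k i j = (\<Sum>l\<in>{..k}. A (k - l) i j)"
    unfolding mconv_le using i by (intro sum.cong refl) (simp add: dg1_def sum.delta)
  also have "\<dots> = (\<Sum>l\<in>{..k}. A l i j)" by (rule sum_flip)
  finally show ?thesis .
qed

definition Hs :: "nat \<Rightarrow> nat \<Rightarrow> nat \<Rightarrow> nat^'d::finite \<Rightarrow> ((nat \<Rightarrow> nat) \<times> (nat \<Rightarrow> nat^'d)) set" where
  "Hs s n m a = {h \<in> PiE {..n} (\<lambda>_. {1..s}) \<times> PiE {..n} (\<lambda>_. {..a}). fst h n = m \<and> snd h n = a}"

lemma finite_Hs: "finite (Hs s n m a)"
  unfolding Hs_def
  by (rule finite_subset[of _ "PiE {..n} (\<lambda>_. {1..s}) \<times> PiE {..n} (\<lambda>_. {..a})"]) (auto intro!: finite_PiE)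

locale mrc =
  fixes s :: nat
    and q :: "'d::finite mseq"
    and M :: "nat \<Rightarrow> 'w measure"
    and J :: "nat \<Rightarrow> 'w \<Rightarrow> nat"
    and S :: "nat \<Rightarrow> 'w \<Rightarrow> nat ^ 'd"
  assumes prob: "\<And>i. i \<in> {1..s} \<Longrightarrow> prob_space (M i)"
    and J_meas: "\<And>i n. i \<in> {1..s} \<Longrightarrow> J n \<in> measurable (M i) (count_space UNIV)"
    and S_meas: "\<And>i n. i \<in> {1..s} \<Longrightarrow> S n \<in> measurable (M i) (count_space UNIV)"
    and J_range: "\<And>i n \<omega>. i \<in> {1..s} \<Longrightarrow> \<omega> \<in> space (M i) \<Longrightarrow> J n \<omega> \<in> {1..s}"
    and S_zero: "\<And>i \<omega>. i \<in> {1..s} \<Longrightarrow> \<omega> \<in> space (M i) \<Longrightarrow> S 0 \<omega> = 0"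
    and S_incr: "\<And>i n \<omega>. i \<in> {1..s} \<Longrightarrow> \<omega> \<in> space (M i) \<Longrightarrow> S n \<omega> < S (Suc n) \<omega>"
    and J_init: "\<And>i. i \<in> {1..s} \<Longrightarrow> measure (M i) {\<omega> \<in> space (M i). J 0 \<omega> = i} = 1"
    and markov: "\<And>i n js ss j k. i \<in> {1..s} \<Longrightarrow> j \<in> {1..s} \<Longrightarrow>
        measure (M i) {\<omega> \<in> space (M i). (\<forall>m\<le>n. J m \<omega> = js m \<and> S m \<omega> = ss m)
                                   \<and> J (Suc n) \<omega> = j \<and> S (Suc n) \<omega> = ss n + k}
      = q k (js n) j * measure (M i) {\<omega> \<in> space (M i). \<forall>m\<le>n. J m \<omega> = js m \<and> S m \<omega> = ss m}"
begin

lemma sets_J: "i \<in> {1..s} \<Longrightarrow> {\<omega>\<in>space (M i). P (J n \<omega>)} \<in> sets (M i)"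
proof -
  assume i: "i \<in> {1..s}"
  have "{\<omega>\<in>space (M i). P (J n \<omega>)} = J n -` {x. P x} \<inter> space (M i)" by auto
  then show ?thesis using measurable_sets[OF J_meas[OF i], of "{x. P x}" n] by simp
qed

lemma sets_S: "i \<in> {1..s} \<Longrightarrow> {\<omega>\<in>space (M i). P (S n \<omega>)} \<in> sets (M i)"
proof -
  assume i: "i \<in> {1..s}"
  have "{\<omega>\<in>space (M i). P (S n \<omega>)} = S n -` {x. P x} \<inter> space (M i)" by auto
  then show ?thesis using measurable_sets[OF S_meas[OF i], of "{x. P x}" n] by simp
qed

lemma sets_hist: "i \<in> {1..s} \<Longrightarrow> {\<omega>\<in>space (M i). \<forall>t\<le>n. J t \<omega> = js t \<and> S t \<omega> = ss t} \<in> sets (M i)"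
proof -
  assume i: "i \<in> {1..s}"
  note [measurable] = J_meas[OF i] S_meas[OF i]
  show ?thesis by measurable
qed

lemma S_mono: "i \<in> {1..s} \<Longrightarrow> \<omega> \<in> space (M i) \<Longrightarrow> t \<le> n \<Longrightarrow> S t \<omega> \<le> S n \<omega>"
proof -
  assume i: "i \<in> {1..s}" and w: "\<omega> \<in> space (M i)" and t: "t \<le> n"
  have "\<And>m. S m \<omega> \<le> S (Suc m) \<omega>" using S_incr[OF i w] by (simp add: less_imp_le)
  then show ?thesis using t by (rule lift_Suc_mono_le)
qed

lemma sz_S: "i \<in> {1..s} \<Longrightarrow> \<omega> \<in> space (M i) \<Longrightarrow> n \<le> sz (S n \<omega>)"
proof (induction n)
  case 0 then show ?case by simp
next
  case (Suc n)
  then show ?case using sz_strict[OF S_incr[OF Suc.prems, of n]] Suc.IH[OF Suc.prems] by linarith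
qed

lemma fin_union: "i \<in> {1..s} \<Longrightarrow> finite I \<Longrightarrow> (\<And>x. x \<in> I \<Longrightarrow> A x \<in> sets (M i)) \<Longrightarrow> disjoint_family_on A I \<Longrightarrow>
   measure (M i) (\<Union>x\<in>I. A x) = (\<Sum>x\<in>I. measure (M i) (A x))"
  using finite_measure.finite_measure_finite_Union[OF prob_space.finite_measure[OF prob]] by blast

lemma decomp:
  assumes i: "i \<in> {1..s}" and B: "B \<in> sets (M i)"
  shows "measure (M i) ({\<omega>\<in>space (M i). J n \<omega> = m \<and> S n \<omega> = a} \<inter> B)
    = (\<Sum>h\<in>Hs s n m a. measure (M i) ({\<omega>\<in>space (M i). \<forall>t\<le>n. J t \<omega> = fst h t \<and> S t \<omega> = snd h t} \<inter> B))"
proof -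
  let ?A = "\<lambda>h. {\<omega>\<in>space (M i). \<forall>t\<le>n. J t \<omega> = fst h t \<and> S t \<omega> = snd h t} \<inter> B"
  have eq: "{\<omega>\<in>space (M i). J n \<omega> = m \<and> S n \<omega> = a} \<inter> B = (\<Union>h\<in>Hs s n m a. ?A h)"
  proof
    show "{\<omega>\<in>space (M i). J n \<omega> = m \<and> S n \<omega> = a} \<inter> B \<subseteq> (\<Union>h\<in>Hs s n m a. ?A h)"
    proof
      fix \<omega> assume w: "\<omega> \<in> {\<omega>\<in>space (M i). J n \<omega> = m \<and> S n \<omega> = a} \<inter> B"
      let ?h = "(restrict (\<lambda>t. J t \<omega>) {..n}, restrict (\<lambda>t. S t \<omega>) {..n})"
      have "?h \<in> Hs s n m a" using w J_range[OF i, of \<omega>] S_mono[OF i, of \<omega>] by (auto simp: Hs_def)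
      moreover have "\<omega> \<in> ?A ?h" using w by auto
      ultimately show "\<omega> \<in> (\<Union>h\<in>Hs s n m a. ?A h)" by blast
    qed
    show "(\<Union>h\<in>Hs s n m a. ?A h) \<subseteq> {\<omega>\<in>space (M i). J n \<omega> = m \<and> S n \<omega> = a} \<inter> B"
      by (auto simp: Hs_def)
  qed
  have disj: "disjoint_family_on ?A (Hs s n m a)"
    unfolding disjoint_family_on_def
  proof (intro ballI impI)
    fix h h' assume h: "h \<in> Hs s n m a" "h' \<in> Hs s n m a" "h \<noteq> h'"
    show "?A h \<inter> ?A h' = {}"
    proof (rule ccontr)
      assume "?A h \<inter> ?A h' \<noteq> {}"
      then obtain \<omega> where "\<omega> \<in> ?A h" "\<omega> \<in> ?A h'" by blast
      then have e: "\<forall>t\<le>n. fst h t = fst h' t \<and> snd h t = snd h' t" by auto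
      have "fst h = fst h'" using h(1,2) e by (intro PiE_ext[of _ "{..n}" "\<lambda>_. {1..s}"]) (auto simp: Hs_def)
      moreover have "snd h = snd h'" using h(1,2) e by (intro PiE_ext[of _ "{..n}" "\<lambda>_. {..a}"]) (auto simp: Hs_def)
      ultimately show False using h(3) by (simp add: prod_eq_iff)
    qed
  qed
  have sets: "\<And>h. ?A h \<in> sets (M i)" using sets_hist[OF i] B by blast
  show ?thesis unfolding eq by (rule fin_union[OF i finite_Hs sets disj])
qed

lemma step:
  assumes i: "i \<in> {1..s}" and j: "j \<in> {1..s}"
  shows "measure (M i) {\<omega>\<in>space (M i). J n \<omega> = m \<and> S n \<omega> = a \<and> J (Suc n) \<omega> = j \<and> S (Suc n) \<omega> = a + b}
       = q b m j * measure (M i) {\<omega>\<in>space (M i). J n \<omega> = m \<and> S n \<omega> = a}"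
proof -
  note [measurable] = J_meas[OF i] S_meas[OF i]
  let ?B = "{\<omega>\<in>space (M i). J (Suc n) \<omega> = j \<and> S (Suc n) \<omega> = a + b}"
  let ?H = "\<lambda>h. {\<omega>\<in>space (M i). \<forall>t\<le>n. J t \<omega> = fst h t \<and> S t \<omega> = snd h t}"
  have B: "?B \<in> sets (M i)" by measurable
  have "{\<omega>\<in>space (M i). J n \<omega> = m \<and> S n \<omega> = a \<and> J (Suc n) \<omega> = j \<and> S (Suc n) \<omega> = a + b}
     = {\<omega>\<in>space (M i). J n \<omega> = m \<and> S n \<omega> = a} \<inter> ?B" by auto
  then have "measure (M i) {\<omega>\<in>space (M i). J n \<omega> = m \<and> S n \<omega> = a \<and> J (Suc n) \<omega> = j \<and> S (Suc n) \<omega> = a + b}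
     = (\<Sum>h\<in>Hs s n m a. measure (M i) (?H h \<inter> ?B))" using decomp[OF i B] by simp
  also have "\<dots> = (\<Sum>h\<in>Hs s n m a. q b m j * measure (M i) (?H h))"
  proof (rule sum.cong[OF refl])
    fix h assume h: "h \<in> Hs s n m a"
    have "?H h \<inter> ?B = {\<omega>\<in>space (M i). (\<forall>t\<le>n. J t \<omega> = fst h t \<and> S t \<omega> = snd h t) \<and> J (Suc n) \<omega> = j \<and> S (Suc n) \<omega> = snd h n + b}"
      using h by (auto simp: Hs_def)
    then show "measure (M i) (?H h \<inter> ?B) = q b m j * measure (M i) (?H h)"
      using markov[OF i j, of n "fst h" "snd h" b] h by (simp add: Hs_def)
  qed
  also have "\<dots> = q b m j * (\<Sum>h\<in>Hs s n m a. measure (M i) (?H h \<inter> space (M i)))"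
    by (simp add: sum_distrib_left Int_absorb2)
  also have "\<dots> = q b m j * measure (M i) {\<omega>\<in>space (M i). J n \<omega> = m \<and> S n \<omega> = a}"
    using decomp[OF i sets.top, of n m a] by (simp add: Int_absorb2)
  finally show ?thesis .
qed

lemma recur:
  assumes i: "i \<in> {1..s}" and j: "j \<in> {1..s}"
  shows "measure (M i) {\<omega>\<in>space (M i). J (Suc n) \<omega> = j \<and> S (Suc n) \<omega> = l}
     = (\<Sum>m\<in>{1..s}. \<Sum>a\<in>{..l}. q (l - a) m j * measure (M i) {\<omega>\<in>space (M i). J n \<omega> = m \<and> S n \<omega> = a})"
proof -
  note [measurable] = J_meas[OF i] S_meas[OF i]
  let ?C = "\<lambda>x. {\<omega>\<in>space (M i). J n \<omega> = fst x \<and> S n \<omega> = snd x \<and> J (Suc n) \<omega> = j \<and> S (Suc n) \<omega> = l}"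
  have eq: "{\<omega>\<in>space (M i). J (Suc n) \<omega> = j \<and> S (Suc n) \<omega> = l} = (\<Union>x\<in>{1..s} \<times> {..l}. ?C x)"
  proof
    show "{\<omega>\<in>space (M i). J (Suc n) \<omega> = j \<and> S (Suc n) \<omega> = l} \<subseteq> (\<Union>x\<in>{1..s} \<times> {..l}. ?C x)"
    proof
      fix \<omega> assume w: "\<omega> \<in> {\<omega>\<in>space (M i). J (Suc n) \<omega> = j \<and> S (Suc n) \<omega> = l}"
      then have "(J n \<omega>, S n \<omega>) \<in> {1..s} \<times> {..l}" using J_range[OF i, of \<omega> n] S_mono[OF i, of \<omega> n "Suc n"] by auto
      moreover have "\<omega> \<in> ?C (J n \<omega>, S n \<omega>)" using w by auto
      ultimately show "\<omega> \<in> (\<Union>x\<in>{1..s} \<times> {..l}. ?C x)" by blast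
    qed
  qed auto
  have disj: "disjoint_family_on ?C ({1..s} \<times> {..l})"
    by (auto simp: disjoint_family_on_def prod_eq_iff)
  have sets: "\<And>x. ?C x \<in> sets (M i)" by measurable
  have "measure (M i) {\<omega>\<in>space (M i). J (Suc n) \<omega> = j \<and> S (Suc n) \<omega> = l} = (\<Sum>x\<in>{1..s} \<times> {..l}. measure (M i) (?C x))"
    unfolding eq by (rule fin_union[OF i _ sets disj]) simp
  also have "\<dots> = (\<Sum>m\<in>{1..s}. \<Sum>a\<in>{..l}. measure (M i) (?C (m, a)))"
    by (simp add: sum.cartesian_product case_prod_beta)
  also have "\<dots> = (\<Sum>m\<in>{1..s}. \<Sum>a\<in>{..l}. q (l - a) m j * measure (M i) {\<omega>\<in>space (M i). J n \<omega> = m \<and> S n \<omega> = a})"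
  proof (intro sum.cong refl)
    fix m a assume a: "a \<in> {..l}"
    show "measure (M i) (?C (m, a)) = q (l - a) m j * measure (M i) {\<omega>\<in>space (M i). J n \<omega> = m \<and> S n \<omega> = a}"
      using step[OF i j, of n m a "l - a"] vec_add_diff[of a l] a by simp
  qed
  finally show ?thesis .
qed

lemma base:
  assumes i: "i \<in> {1..s}"
  shows "measure (M i) {\<omega>\<in>space (M i). J 0 \<omega> = j \<and> S 0 \<omega> = l} = munit l i j"
proof -
  interpret prob_space "M i" by (rule prob[OF i])
  note [measurable] = J_meas[OF i] S_meas[OF i]
  have e: "{\<omega>\<in>space (M i). J 0 \<omega> = j \<and> S 0 \<omega> = l} = (if l = 0 then {\<omega>\<in>space (M i). J 0 \<omega> = j} else {})"
    using S_zero[OF i] by auto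
  show ?thesis
  proof (cases "l = 0")
    case False
    have E: "{\<omega>\<in>space (M i). J 0 \<omega> = j \<and> S 0 \<omega> = l} = {}" using S_zero[OF i] False by auto
    show ?thesis unfolding E using False by (simp add: munit_def)
  next
    case True
    show ?thesis
    proof (cases "j = i")
      case True then show ?thesis using e \<open>l = 0\<close> J_init[OF i] by (simp add: munit_def)
    next
      case False
      have "measure (M i) {\<omega>\<in>space (M i). J 0 \<omega> = j} \<le> measure (M i) (space (M i) - {\<omega>\<in>space (M i). J 0 \<omega> = i})"
        using False by (intro finite_measure_mono) auto
      also have "\<dots> = 0" using prob_compl[of "{\<omega>\<in>space (M i). J 0 \<omega> = i}"] J_init[OF i] by simp
      finally show ?thesis using e \<open>l = 0\<close> False by (simp add: munit_def measure_nonneg order.antisym)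
    qed
  qed
qed

lemma p_mpow:
  "i \<in> {1..s} \<Longrightarrow> j \<in> {1..s} \<Longrightarrow> measure (M i) {\<omega>\<in>space (M i). J n \<omega> = j \<and> S n \<omega> = l} = mpow s q n l i j"
proof (induction n arbitrary: l j)
  case 0 then show ?case using base by simp
next
  case (Suc n)
  have "measure (M i) {\<omega>\<in>space (M i). J (Suc n) \<omega> = j \<and> S (Suc n) \<omega> = l}
     = (\<Sum>m\<in>{1..s}. \<Sum>a\<in>{..l}. q (l - a) m j * mpow s q n a i m)"
    using recur[OF Suc.prems, of n l] Suc.IH[OF Suc.prems(1)] by simp
  also have "\<dots> = mpow s q (Suc n) l i j"
    unfolding mpow_Suc'[OF Suc.prems] mconv_le
    by (subst sum.swap) (simp add: mult.commute)
  finally show ?case .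
qed

lemma mpow_zero:
  assumes i: "i \<in> {1..s}" and j: "j \<in> {1..s}" and n: "sz l < n"
  shows "mpow s q n l i j = 0"
proof -
  have E: "{\<omega>\<in>space (M i). J n \<omega> = j \<and> S n \<omega> = l} = {}"
    using sz_S[OF i, of _ n] n by force
  show ?thesis using p_mpow[OF i j, of n l, unfolded E] by simp
qed

lemma MRF_eq:
  assumes i: "i \<in> {1..s}" and j: "j \<in> {1..s}"
  shows "MRF M J S k i j = (\<Sum>n\<le>sz k. \<Sum>l\<in>{..k}. mpow s q n l i j)"
proof -
  interpret prob_space "M i" by (rule prob[OF i])
  note [measurable] = J_meas[OF i] S_meas[OF i]
  let ?E = "\<lambda>n. {\<omega>\<in>space (M i). J n \<omega> = j \<and> S n \<omega> \<le> k}"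
  have pt: "Ntilde J S j k \<omega> = (\<Sum>n\<le>sz k. indicator (?E n) \<omega>)" if w: "\<omega> \<in> space (M i)" for \<omega>
  proof -
    let ?A = "{n. S n \<omega> \<le> k}"
    have sub: "?A \<subseteq> {..sz k}"
    proof
      fix n assume "n \<in> ?A"
      then have "sz (S n \<omega>) \<le> sz k" by (simp add: sz_mono)
      then show "n \<in> {..sz k}" using sz_S[OF i w, of n] by simp
    qed
    have fin: "finite ?A" using sub finite_subset by blast
    have ne: "0 \<in> ?A" using S_zero[OF i w] by (simp add: less_eq_vec_def)
    have N: "Ncount S k \<omega> = Max ?A" unfolding Ncount_def using cSup_eq_Max[OF fin] ne by blast
    have A_eq: "{0..Ncount S k \<omega>} = ?A"
    proof
      show "{0..Ncount S k \<omega>} \<subseteq> ?A"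
      proof
        fix n assume "n \<in> {0..Ncount S k \<omega>}"
        then have "n \<le> Max ?A" using N by simp
        moreover have "Max ?A \<in> ?A" using Max_in[OF fin] ne by blast
        ultimately show "n \<in> ?A" using S_mono[OF i w, of n "Max ?A"] by (auto intro: order_trans)
      qed
      show "?A \<subseteq> {0..Ncount S k \<omega>}" using N Max_ge[OF fin] by auto
    qed
    have "Ntilde J S j k \<omega> = (\<Sum>n\<in>?A. if J n \<omega> = j then 1 else 0)"
      unfolding Ntilde_def A_eq ..
    also have "\<dots> = (\<Sum>n\<in>{..sz k}. if J n \<omega> = j \<and> S n \<omega> \<le> k then 1 else 0)"
      by (rule sum.mono_neutral_cong_left) (use sub in auto)
    also have "\<dots> = (\<Sum>n\<le>sz k. indicator (?E n) \<omega>)" using w by (intro sum.cong refl) (simp add: indicator_def)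
    finally show ?thesis .
  qed
  have "MRF M J S k i j = integral\<^sup>L (M i) (\<lambda>\<omega>. \<Sum>n\<le>sz k. indicator (?E n) \<omega>)"
    unfolding MRF_def by (rule Bochner_Integration.integral_cong) (simp_all add: pt)
  also have "\<dots> = (\<Sum>n\<le>sz k. measure (M i) (?E n))"
  proof (subst Bochner_Integration.integral_sum)
    fix n
    have "?E n \<in> sets (M i)" by measurable
    then show "integrable (M i) (indicator (?E n) :: 'w \<Rightarrow> real)"
      by (intro integrable_real_indicator) (auto simp: less_top[symmetric])
  next
    show "(\<Sum>n\<le>sz k. integral\<^sup>L (M i) (indicator (?E n))) = (\<Sum>n\<le>sz k. measure (M i) (?E n))"
      by (simp add: Int_absorb2)
  qed
  also have "\<dots> = (\<Sum>n\<le>sz k. \<Sum>l\<in>{..k}. mpow s q n l i j)"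
  proof (rule sum.cong[OF refl])
    fix n
    let ?C = "\<lambda>l. {\<omega>\<in>space (M i). J n \<omega> = j \<and> S n \<omega> = l}"
    have eq: "?E n = (\<Union>l\<in>{..k}. ?C l)" by auto
    have disj: "disjoint_family_on ?C {..k}" by (auto simp: disjoint_family_on_def)
    have sets: "\<And>l. ?C l \<in> sets (M i)" by measurable
    have "measure (M i) (?E n) = (\<Sum>l\<in>{..k}. measure (M i) (?C l))"
      unfolding eq by (rule fin_union[OF i _ sets disj]) simp
    also have "\<dots> = (\<Sum>l\<in>{..k}. mpow s q n l i j)" using p_mpow[OF i j] by simp
    finally show "measure (M i) (?E n) = (\<Sum>l\<in>{..k}. mpow s q n l i j)" .
  qed
  finally show ?thesis .
qed

lemma useq_fin:
  assumes i: "i \<in> {1..s}" and j: "j \<in> {1..s}" and N: "sz l \<le> N"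
  shows "useq s q l i j = (\<Sum>n\<le>N. mpow s q n l i j)"
  unfolding useq_def by (rule suminf_finite) (use mpow_zero[OF i j] N in auto)

lemma claim3:
  assumes i: "i \<in> {1..s}" and j: "j \<in> {1..s}"
  shows "MRF M J S k i j = (\<Sum>l\<in>{..k}. useq s q l i j)"
proof -
  have "MRF M J S k i j = (\<Sum>l\<in>{..k}. \<Sum>n\<le>sz k. mpow s q n l i j)"
    unfolding MRF_eq[OF i j] by (rule sum.swap)
  also have "\<dots> = (\<Sum>l\<in>{..k}. useq s q l i j)"
    by (intro sum.cong refl useq_fin[OF i j, symmetric]) (simp add: sz_mono)
  finally show ?thesis .
qed

lemma u_rec:
  assumes i: "i \<in> {1..s}" and j: "j \<in> {1..s}"
  shows "useq s q l i j = munit l i j + mconv s q (useq s q) l i j"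
proof -
  have "useq s q l i j = (\<Sum>n\<le>Suc (sz l). mpow s q n l i j)"
    by (rule useq_fin[OF i j]) simp
  also have "\<dots> = munit l i j + (\<Sum>n\<le>sz l. mpow s q (Suc n) l i j)"
    by (subst sum.atMost_Suc_shift) simp
  also have "(\<Sum>n\<le>sz l. mpow s q (Suc n) l i j)
      = (\<Sum>n\<le>sz l. \<Sum>a\<in>{..l}. \<Sum>m\<in>{1..s}. q a i m * mpow s q n (l - a) m j)"
    by (simp add: mconv_le)
  also have "\<dots> = (\<Sum>a\<in>{..l}. \<Sum>m\<in>{1..s}. q a i m * (\<Sum>n\<le>sz l. mpow s q n (l - a) m j))"
    by (simp add: sum_distrib_left) (subst sum.swap, rule sum.cong[OF refl], rule sum.swap)
  also have "\<dots> = (\<Sum>a\<in>{..l}. \<Sum>m\<in>{1..s}. q a i m * useq s q (l - a) m j)"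
  proof (intro sum.cong refl)
    fix a m assume m: "m \<in> {1..s}"
    have "sz (l - a) \<le> sz l" by (rule sz_mono) (simp add: less_eq_vec_def)
    then show "q a i m * (\<Sum>n\<le>sz l. mpow s q n (l - a) m j) = q a i m * useq s q (l - a) m j"
      using useq_fin[OF m j] by simp
  qed
  also have "\<dots> = mconv s q (useq s q) l i j" by (simp add: mconv_le)
  finally show ?thesis .
qed

lemma claim1:
  assumes i: "i \<in> {1..s}" and j: "j \<in> {1..s}"
  shows "MRF M J S k i j = dg1 k i j + mconv s q (MRF M J S) k i j"
proof -
  define G where "G a b = (\<Sum>m\<in>{1..s}. q a i m * useq s q b m j)" for a b
  have "MRF M J S k i j = (\<Sum>l\<in>{..k}. munit l i j) + (\<Sum>l\<in>{..k}. mconv s q (useq s q) l i j)"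
    unfolding claim3[OF i j] u_rec[OF i j] by (simp add: sum.distrib)
  also have "(\<Sum>l\<in>{..k}. munit l i j) = dg1 k i j"
    by (simp add: munit_def dg1_def less_eq_vec_def)
  also have "(\<Sum>l\<in>{..k}. mconv s q (useq s q) l i j) = (\<Sum>x\<in>{..k}. \<Sum>a\<in>{..x}. G a (x - a))"
    by (simp add: mconv_le G_def)
  also have "\<dots> = (\<Sum>a\<in>{..k}. \<Sum>b\<in>{..k - a}. G a b)"
    using tri_sum[of "\<lambda>a b c. G a b" k] by simp
  also have "\<dots> = mconv s q (MRF M J S) k i j"
  proof -
    have "mconv s q (MRF M J S) k i j = (\<Sum>a\<in>{..k}. \<Sum>m\<in>{1..s}. q a i m * (\<Sum>b\<in>{..k - a}. useq s q b m j))"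
      unfolding mconv_le by (intro sum.cong refl) (simp add: claim3[OF _ j])
    also have "\<dots> = (\<Sum>a\<in>{..k}. \<Sum>b\<in>{..k - a}. G a b)"
      unfolding G_def by (simp add: sum_distrib_left) (rule sum.cong[OF refl], rule sum.swap)
    finally show ?thesis by simp
  qed
  finally show ?thesis .
qed

end

theorem proposition9:
  fixes s :: nat
    and q :: "'d::finite mseq"
    and M :: "nat \<Rightarrow> 'w measure"
    and J :: "nat \<Rightarrow> 'w \<Rightarrow> nat"
    and S :: "nat \<Rightarrow> 'w \<Rightarrow> nat ^ 'd"
  assumes kernel_nonneg: "\<And>i j k. i \<in> {1..s} \<Longrightarrow> j \<in> {1..s} \<Longrightarrow> 0 \<le> q k i j"
    and kernel_zero: "\<And>i j. i \<in> {1..s} \<Longrightarrow> j \<in> {1..s} \<Longrightarrow> q 0 i j = 0"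
    and kernel_sum: "\<And>i. i \<in> {1..s} \<Longrightarrow> (\<Sum>j\<in>{1..s}. \<Sum>\<^sub>\<infinity>k. q k i j) = 1"
    and prob: "\<And>i. i \<in> {1..s} \<Longrightarrow> prob_space (M i)"
    and J_meas: "\<And>i n. i \<in> {1..s} \<Longrightarrow> J n \<in> measurable (M i) (count_space UNIV)"
    and S_meas: "\<And>i n. i \<in> {1..s} \<Longrightarrow> S n \<in> measurable (M i) (count_space UNIV)"
    and J_range: "\<And>i n \<omega>. i \<in> {1..s} \<Longrightarrow> \<omega> \<in> space (M i) \<Longrightarrow> J n \<omega> \<in> {1..s}"
    and S_zero: "\<And>i \<omega>. i \<in> {1..s} \<Longrightarrow> \<omega> \<in> space (M i) \<Longrightarrow> S 0 \<omega> = 0"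
    and S_incr: "\<And>i n \<omega>. i \<in> {1..s} \<Longrightarrow> \<omega> \<in> space (M i) \<Longrightarrow> S n \<omega> < S (Suc n) \<omega>"
    and J_init: "\<And>i. i \<in> {1..s} \<Longrightarrow> measure (M i) {\<omega> \<in> space (M i). J 0 \<omega> = i} = 1"
    and markov: "\<And>i n js ss j k. i \<in> {1..s} \<Longrightarrow> j \<in> {1..s} \<Longrightarrow>
        measure (M i) {\<omega> \<in> space (M i). (\<forall>m\<le>n. J m \<omega> = js m \<and> S m \<omega> = ss m)
                                   \<and> J (Suc n) \<omega> = j \<and> S (Suc n) \<omega> = ss n + k}
      = q k (js n) j * measure (M i) {\<omega> \<in> space (M i). \<forall>m\<le>n. J m \<omega> = js m \<and> S m \<omega> = ss m}"
  shows "\<forall>i\<in>{1..s}. \<forall>j\<in>{1..s}. \<forall>k.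
           MRF M J S k i j = dg1 k i j + mconv s q (MRF M J S) k i j
         \<and> MRF M J S k i j = mconv s dg1 (useq s q) k i j
         \<and> MRF M J S k i j = (\<Sum>l\<in>{l. l \<le> k}. useq s q l i j)"
  proof -
  interpret mrc s q M J S
    by (rule mrc.intro; (rule prob J_meas S_meas J_range S_zero S_incr J_init markov; assumption))
  show ?thesis
  proof (intro ballI allI conjI)
    fix i j k assume i: "i \<in> {1..s}" and j: "j \<in> {1..s}"
    show "MRF M J S k i j = dg1 k i j + mconv s q (MRF M J S) k i j" by (rule claim1[OF i j])
    show "MRF M J S k i j = mconv s dg1 (useq s q) k i j" by (simp add: conv_dg1[OF i] claim3[OF i j])
    show "MRF M J S k i j = (\<Sum>l\<in>{l. l \<le> k}. useq s q l i j)" by (simp add: claim3[OF i j] atMost_def)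
  qed
qed

end
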